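(* The generating function of the Stern polynomials satisfies $$\sum_{n=0}^{\infty}B_n(t)x^{n}=x\prod_{k=0}^{\infty}\bigl(1+tx^{2^{k}}+x^{2^{k+1}}\bigr)$$ as formal power series in $x$ with coefficients in $\mathbb{Z}[t]$; moreover, for every real $t$ and every real $x$ with $|x|<1$, both the series and the infinite product converge and are equal.
   Context: The Stern polynomials $B_n(t)\in\mathbb{Z}[t]$, $n\ge 0$, are defined by $B_0(t)=0$, $B_1(t)=1$, $B_{2n}(t)=tB_n(t)$ and $B_{2n+1}(t)=B_n(t)+B_{n+1}(t)$ for $n\ge 1$. *)

theory Defs
  imports "HOL-Analysis.Analysis" "HOL-Computational_Algebra.Computational_Algebra"
begin

function stern_poly :: "nat \<Rightarrow> int poly" where
  "stern_poly n =
     (if n = 0 then 0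
      else if n = 1 then 1
      else if even n then [:0, 1:] * stern_poly (n div 2)
      else stern_poly (n div 2) + stern_poly (n div 2 + 1))"
  by auto
termination
  by (relation "Wellfounded.measure id") (auto elim!: oddE)

end

theory Submission
  imports Defs
begin


lemma compose_sq_nth:
  fixes f :: "'a::comm_ring_1 fps"
  shows "(f oo fps_X^2) $ n = (if even n then f $ (n div 2) else 0)"
proof -
  have "(f oo fps_X^2) $ n = (\<Sum>i=0..n. f$i * (if n = 2*i then 1 else 0))"
  proof -
    have "((fps_X::'a fps)^2)^i $ n = (if n = 2*i then 1 else 0)" for i
    proof -
      have "((fps_X::'a fps)^2)^i = fps_X^(2*i)" by (simp add: power_mult)
      then show ?thesis by (simp only: fps_X_power_iff) simp
    qed
    then show ?thesis by (simp add: fps_compose_nth)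
  qed
  also have "\<dots> = (\<Sum>i\<in>{0..n} \<inter> {i. n = 2*i}. f$i)"
    by (simp add: sum.inter_restrict if_distrib cong: if_cong)
  also have "\<dots> = (if even n then f $ (n div 2) else 0)"
  proof (cases "even n")
    case True
    then have "{0..n} \<inter> {i. n = 2*i} = {n div 2}" by auto
    then show ?thesis using True by simp
  next
    case False
    then have "{0..n} \<inter> {i. n = 2*i} = {}" by auto
    then show ?thesis using False by simp
  qed
  finally show ?thesis .
qed

definition PP :: "nat \<Rightarrow> int poly fps" where
  "PP k = 1 + fps_const [:0, 1:] * fps_X ^ (2 ^ k) + fps_X ^ (2 ^ (k + 1))"

lemma X2_0: "(fps_X^2 :: 'a::comm_ring_1 fps) $ 0 = 0" by simp

lemma Xpow_compose: "(fps_X ^ m :: int poly fps) oo fps_X^2 = fps_X ^ (2*m)"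
proof -
  have "(fps_X ^ m :: int poly fps) oo fps_X^2 = (fps_X oo fps_X^2)^m"
    by (rule fps_compose_power[OF X2_0, symmetric])
  also have "\<dots> = (fps_X^2)^m" by (subst fps_X_fps_compose_startby0) simp_all
  also have "\<dots> = fps_X ^ (2*m)" by (simp add: power_mult)
  finally show ?thesis .
qed

lemma PP_compose: "PP k oo fps_X^2 = PP (Suc k)"
  unfolding PP_def
  by (simp add: fps_compose_add_distrib fps_compose_mult_distrib[OF X2_0] Xpow_compose
       power_Suc fps_compose_1 flip: power_Suc)

lemma sp_even: "n \<ge> 1 \<Longrightarrow> stern_poly (2*n) = [:0,1:] * stern_poly n"
  by (subst stern_poly.simps) auto
lemma sp_odd: "n \<ge> 1 \<Longrightarrow> stern_poly (2*n+1) = stern_poly n + stern_poly (n+1)"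
  by (subst stern_poly.simps) auto
lemma sp_0 [simp]: "stern_poly 0 = 0" by (subst stern_poly.simps) auto
lemma sp_1 [simp]: "stern_poly 1 = 1" by (subst stern_poly.simps) auto

definition QQ :: "nat \<Rightarrow> int poly fps" where "QQ N = (\<Prod>k<N. PP k)"
definition RR :: "int poly fps" where "RR = Abs_fps (\<lambda>n. stern_poly (n+1))"

lemma QQ_Suc: "QQ (Suc N) = PP 0 * (QQ N oo fps_X^2)"
  unfolding QQ_def prod.lessThan_Suc_shift
  by (simp add: fps_compose_prod_distrib[OF X2_0] PP_compose)

lemma PP0_mult_nth: "(PP 0 * S) $ n = S $ n + [:0,1:] * (if n = 0 then 0 else S $ (n-1))
    + (if n < 2 then 0 else S $ (n - 2))"
  unfolding PP_def by (simp add: distrib_right fps_X_power_mult_nth mult.assoc)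

lemma RR_eq: "RR = PP 0 * (RR oo fps_X^2)"
proof (rule fps_ext)
  fix n
  show "RR $ n = (PP 0 * (RR oo fps_X^2)) $ n"
  proof (cases "even n")
    case True
    then obtain m where m: "n = 2*m" by blast
    show ?thesis
    proof (cases "m = 0")
      case True thus ?thesis using m by (simp add: PP0_mult_nth compose_sq_nth RR_def PP_def)
    next
      case False
      have "n - 2 = 2 * (m - 1)" "Suc (m-1) = m" using m False by auto
      then show ?thesis using m False
        by (simp add: PP0_mult_nth compose_sq_nth RR_def sp_odd add.commute)
    qed
  next
    case False
    then obtain m where m: "n = 2*m+1" by (metis oddE)
    have "n - 1 = 2 * m" using m by simp
    then show ?thesis using m
      by (simp add: PP0_mult_nth compose_sq_nth RR_def sp_even[of "m+1", simplified] )
  qed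
qed

lemma RR_QQ: "i < 2^N \<Longrightarrow> (RR - QQ N) $ i = 0"
proof (induction N arbitrary: i)
  case 0
  then show ?case by (simp add: QQ_def RR_def)
next
  case (Suc N)
  have "RR - QQ (Suc N) = PP 0 * ((RR - QQ N) oo fps_X^2)"
    by (subst RR_eq) (simp add: QQ_Suc fps_compose_sub_distrib right_diff_distrib)
  also have "\<dots> $ i = 0"
    unfolding fps_mult_nth
  proof (intro sum.neutral ballI)
    fix j assume "j \<in> {0..i}"
    have "((RR - QQ N) oo fps_X^2) $ (i - j) = 0"
      using Suc.IH[of "(i-j) div 2"] Suc.prems by (auto simp: compose_sq_nth)
    then show "PP 0 $ j * ((RR - QQ N) oo fps_X\<^sup>2) $ (i - j) = 0" by simp
  qed
  finally show ?case .
qed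

lemma fps_part: "(\<lambda>N. fps_X * QQ N) \<longlonglongrightarrow> Abs_fps (\<lambda>n. stern_poly n)"
proof (rule tendsto_fpsI)
  fix n
  show "\<forall>\<^sub>F N in sequentially. (fps_X * QQ N) $ n = Abs_fps stern_poly $ n"
    unfolding eventually_sequentially
  proof (intro exI allI impI)
    fix N assume "N \<ge> n"
    then have "n < 2^N" using less_exp order_le_less_trans by blast
    then have "QQ N $ (n-1) = RR $ (n-1)" using RR_QQ[of "n-1" N] by simp
    then show "(fps_X * QQ N) $ n = Abs_fps stern_poly $ n"
      by (cases n) (simp_all add: RR_def)
  qed
qed



definition bb :: "real \<Rightarrow> nat \<Rightarrow> real" where
  "bb t n = poly (map_poly of_int (stern_poly n)) t"

lemma mp_add: "map_poly (of_int :: int \<Rightarrow> real) (p+q) = map_poly of_int p + map_poly of_int q"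
  by (intro poly_eqI) (simp add: coeff_map_poly)

lemma bb_0 [simp]: "bb t 0 = 0" by (simp add: bb_def)
lemma bb_1 [simp]: "bb t 1 = 1" by (simp add: bb_def)
lemma bb_Suc0 [simp]: "bb t (Suc 0) = 1" by (simp add: bb_def)
lemma bb_even: "n \<ge> 1 \<Longrightarrow> bb t (2*n) = t * bb t n"
  by (simp add: bb_def sp_even map_poly_pCons)
lemma bb_odd: "n \<ge> 1 \<Longrightarrow> bb t (2*n+1) = bb t n + bb t (n+1)"
  by (simp add: bb_def sp_odd mp_add)

lemma superadd:
  assumes "0 \<le> a" "0 \<le> b" "1 \<le> p" shows "a^p + b^p \<le> (a+b::real)^p"
  using assms(3)
proof (induction p rule: dec_induct)
  case base thus ?case by simp
next
  case (step p)
  have "a^Suc p + b^Suc p \<le> (a^p + b^p) * (a+b)"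
    using assms by (simp add: algebra_simps)
  also have "\<dots> \<le> (a+b)^p * (a+b)"
    using step assms by (intro mult_right_mono) auto
  finally show ?case by (simp add: mult.commute)
qed

lemma bb_bound:
  assumes "\<bar>t\<bar> \<le> 2^p" "1 \<le> p"
  shows "\<bar>bb t n\<bar> \<le> real n ^ p"
proof (induction n rule: less_induct)
  case (less n)
  consider "n = 0" | "n = 1" | m where "n = 2*m" "m \<ge> 1" | m where "n = 2*m+1" "m \<ge> 1"
    by (metis One_nat_def add_0 evenE less_one linorder_not_le oddE mult_0_right)
  then show ?case
  proof cases
    case 3
    have "\<bar>bb t n\<bar> = \<bar>t\<bar> * \<bar>bb t m\<bar>" using 3 by (simp add: bb_even abs_mult)
    also have "\<dots> \<le> 2^p * real m ^ p"
      using less.IH[of m] 3 assms by (intro mult_mono) auto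
    also have "\<dots> = real n ^ p" using 3 by (simp add: power_mult_distrib)
    finally show ?thesis .
  next
    case 4
    have "bb t n = bb t m + bb t (m+1)" using 4 bb_odd[of m t] by simp
    then have "\<bar>bb t n\<bar> \<le> \<bar>bb t m\<bar> + \<bar>bb t (m+1)\<bar>" by simp
    also have "\<dots> \<le> real m ^ p + real (m+1) ^ p"
      using less.IH[of m] less.IH[of "m+1"] 4 by (intro add_mono) auto
    also have "\<dots> \<le> (real m + real (m+1)) ^ p" using assms by (intro superadd) auto
    also have "\<dots> = real n ^ p" using 4 by (simp add: add.commute)
    finally show ?thesis .
  qed (use bb_1[of t] in auto)
qed

lemma polygeo:
  fixes z :: real
  assumes "0 \<le> z" "z < 1"
  shows "summable (\<lambda>n. real n ^ p * z^n)"
proof -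
  define y where "y = (1+z)/2"
  define w where "w = (z/y + 1)/2"
  have y: "0 < y" "y < 1" "z < y" using assms by (auto simp: y_def)
  have w: "0 < w" "w < 1" "z \<le> w * y" using y assms by (auto simp: w_def field_simps)
  have "(\<lambda>n. real n ^ p * w ^ n) \<longlonglongrightarrow> 0" using w by real_asymp
  then have "eventually (\<lambda>n. real n ^ p * w ^ n < 1) sequentially"
    by (rule order_tendstoD) simp
  then have ev: "eventually (\<lambda>n. norm (real n ^ p * z^n) \<le> y^n) sequentially"
  proof eventually_elim
    case (elim n)
    have "norm (real n ^ p * z^n) = real n ^ p * z^n" using assms by simp
    also have "\<dots> \<le> real n ^ p * (w*y)^n"
      using assms w by (intro mult_left_mono power_mono) auto
    also have "\<dots> = (real n ^ p * w^n) * y^n" by (simp add: power_mult_distrib)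
    also have "\<dots> \<le> 1 * y^n" using elim y by (intro mult_right_mono) auto
    finally show ?case by simp
  qed
  show ?thesis
    by (rule summable_comparison_test_ev[OF ev]) (use y in auto)
qed

lemma exp_bound: obtains p :: nat where "\<bar>t::real\<bar> \<le> 2^p" "1 \<le> p"
proof -
  obtain n :: nat where "\<bar>t\<bar> < 2^n" using real_arch_pow[of 2 "\<bar>t\<bar>"] by auto
  moreover have "(2::real)^n \<le> 2^(n+1)" by simp
  ultimately show ?thesis using that[of "n+1"] by linarith
qed

lemma bb_summable:
  assumes "\<bar>x\<bar> < 1" shows "summable (\<lambda>n. bb t n * x^n)"
proof -
  obtain p where p: "\<bar>t\<bar> \<le> 2^p" "1 \<le> p" by (rule exp_bound)
  have sg: "summable (\<lambda>n. real n ^ p * \<bar>x\<bar>^n)" using assms by (intro polygeo) auto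
  have le: "norm (bb t n * x^n) \<le> real n ^ p * \<bar>x\<bar>^n" for n
    using bb_bound[OF p, of n] by (simp add: abs_mult power_abs mult_right_mono)
  show ?thesis by (rule summable_comparison_test'[OF sg le])
qed

lemma bb1_summable:
  assumes "\<bar>x\<bar> < 1" shows "summable (\<lambda>n. bb t (n+1) * x^n)"
proof -
  obtain p where p: "\<bar>t\<bar> \<le> 2^p" "1 \<le> p" by (rule exp_bound)
  have sg: "summable (\<lambda>n. 2^p * (real n ^ p * \<bar>x\<bar>^n))" using assms
    by (intro summable_mult polygeo) auto
  have ev: "eventually (\<lambda>n. norm (bb t (n+1) * x^n) \<le> 2^p * (real n ^ p * \<bar>x\<bar>^n)) sequentially"
    unfolding eventually_sequentially
  proof (intro exI[of _ 1] allI impI)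
    fix n :: nat assume n: "1 \<le> n"
    have "norm (bb t (n+1) * x^n) \<le> real (n+1) ^ p * \<bar>x\<bar>^n"
      using bb_bound[OF p, of "n+1"] by (simp add: abs_mult power_abs mult_right_mono del: of_nat_add)
    also have "\<dots> \<le> (2 * real n) ^ p * \<bar>x\<bar>^n"
      using n by (intro mult_right_mono power_mono) auto
    also have "\<dots> = 2^p * (real n ^ p * \<bar>x\<bar>^n)" by (simp add: power_mult_distrib)
    finally show "norm (bb t (n+1) * x^n) \<le> 2^p * (real n ^ p * \<bar>x\<bar>^n)" .
  qed
  show ?thesis by (rule summable_comparison_test_ev[OF ev sg])
qed

definition rr :: "real \<Rightarrow> real \<Rightarrow> real" where
  "rr t y = (\<Sum>n. bb t (n+1) * y^n)"

lemma fe: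
  assumes x: "\<bar>x\<bar> < 1"
  shows "rr t x = (1 + t*x + x^2) * rr t (x^2)"
proof -
  define r2 where "r2 = rr t (x^2)"
  have x2: "\<bar>x^2\<bar> < 1" using x by (simp add: abs_square_less_1)
  define u where "u = (\<lambda>m. bb t (m+1) * x^(2*m))"
  have u: "u sums r2"
    using summable_sums[OF bb1_summable[OF x2, of t]] by (simp add: u_def r2_def rr_def power_mult)
  define v where "v = (\<lambda>n. if even n then bb t (n div 2 + 1) * x^n else 0)"
  define v1 where "v1 = (\<lambda>n. if odd n then bb t ((n-1) div 2 + 1) * x^(n-1) else 0)"
  define v2 where "v2 = (\<lambda>n. if even n \<and> n \<ge> 2 then bb t ((n-2) div 2 + 1) * x^(n-2) else 0)"
  have "(\<lambda>m. v (2*m)) sums r2" using u by (simp add: v_def u_def)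
  then have sv: "v sums r2"
    by (subst (asm) sums_mono_reindex) (auto simp: strict_mono_def v_def)
  have "(\<lambda>m. v1 (2*m+1)) sums r2" using u by (simp add: v1_def u_def)
  then have sv1: "v1 sums r2"
    by (subst (asm) sums_mono_reindex) (auto simp: strict_mono_def v1_def elim!: oddE)
  have "(\<lambda>m. v2 (2*m+2)) sums r2" using u by (simp add: v2_def u_def)
  then have sv2: "v2 sums r2"
  proof (subst (asm) sums_mono_reindex)
    show "strict_mono (\<lambda>m. 2*m+2::nat)" by (auto simp: strict_mono_def)
    fix n assume "n \<notin> range (\<lambda>m. 2*m+2::nat)"
    note nr = this
    have "\<not> (even n \<and> n \<ge> 2)"
    proof
      assume h: "even n \<and> n \<ge> 2"
      then have "n = 2*((n-2) div 2)+2" by auto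
      then show False using nr unfolding image_iff by blast
    qed
    then show "v2 n = 0" unfolding v2_def by auto
  qed
  have "(\<lambda>n. v n + t*x * v1 n + x^2 * v2 n) sums (r2 + t*x*r2 + x^2*r2)"
    by (intro sums_add sums_mult sv sv1 sv2)
  moreover have "v n + t*x * v1 n + x^2 * v2 n = bb t (n+1) * x^n" for n
  proof (cases "even n")
    case True
    then obtain m where m: "n = 2*m" by blast
    show ?thesis
    proof (cases "m = 0")
      case True then show ?thesis using m by (simp add: v_def v1_def v2_def)
    next
      case False
      then obtain k where k: "m = Suc k" by (cases m) auto
      have e1: "v n = bb t (m+1) * x^n" using m by (simp add: v_def)
      have e2: "v1 n = 0" using m by (simp add: v1_def)
      have "n - 2 = 2*k" "n \<ge> 2" using m k by auto
      then have e3: "v2 n = bb t m * x^(2*k)" using m k by (simp add: v2_def)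
      have e4: "x^2 * x^(2*k) = x^n" using m k by (simp add: power_add[symmetric])
      have e5: "bb t (n+1) = bb t m + bb t (m+1)" using m k bb_odd[of m t] by simp
      have "v n + t*x * v1 n + x^2 * v2 n = bb t (m+1) * x^n + bb t m * (x^2 * x^(2*k))"
        by (simp only: e1 e2 e3) simp
      also have "\<dots> = bb t (n+1) * x^n" by (simp only: e4 e5 distrib_right)
      finally show ?thesis .
    qed
  next
    case False
    then obtain m where m: "n = 2*m+1" by (metis oddE)
    have e1: "v n = 0" "v2 n = 0" using m by (simp_all add: v_def v2_def)
    have e2: "v1 n = bb t (m+1) * x^(2*m)" using m by (simp add: v1_def)
    have e3: "bb t (n+1) = t * bb t (m+1)" using m bb_even[of "m+1" t] by simp
    have e4: "x^n = x * x^(2*m)" using m by simp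
    show ?thesis by (simp only: e1 e2 e3 e4) (simp add: mult_ac)
  qed
  ultimately have "(\<lambda>n. bb t (n+1) * x^n) sums (r2 + t*x*r2 + x^2*r2)" by simp
  then have "rr t x = r2 + t*x*r2 + x^2*r2" unfolding rr_def by (rule sums_unique[symmetric])
  then show ?thesis by (simp add: r2_def algebra_simps)
qed

lemma abs_pow_less1: "\<bar>x::real\<bar> < 1 \<Longrightarrow> 0 < k \<Longrightarrow> \<bar>x^k\<bar> < 1"
  by (simp add: power_abs power_less_one_iff)

lemma iter:
  assumes x: "\<bar>x\<bar> < 1"
  shows "rr t x = (\<Prod>k<N. 1 + t * x ^ (2 ^ k) + x ^ (2 ^ (k + 1))) * rr t (x^(2^N))"
proof (induction N)
  case 0 then show ?case by simp
next
  case (Suc N)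
  have "rr t (x^(2^N)) = (1 + t * x ^ (2 ^ N) + (x^(2^N))^2) * rr t ((x^(2^N))^2)"
    by (rule fe) (use x abs_pow_less1 in auto)
  moreover have "(x^(2^N))^2 = x^(2^(N+1))" by (simp add: power_mult[symmetric] mult.commute)
  ultimately show ?case using Suc by (simp add: mult.assoc)
qed

lemma rr_cont: "isCont (rr t) 0"
proof -
  have "(rr t \<longlongrightarrow> bb t (0+1)) (at 0)"
  proof (rule powser_limit_0[of 1])
    fix y :: real assume "norm y < 1"
    then show "(\<lambda>n. bb t (n+1) * y^n) sums rr t y"
      unfolding rr_def by (intro summable_sums bb1_summable) simp
  qed simp
  moreover have "rr t 0 = bb t 1" unfolding rr_def using powser_zero[of "\<lambda>n. bb t (n+1)"] by simp
  ultimately show ?thesis by (simp add: isCont_def)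
qed

lemma conv_prod:
  assumes x: "\<bar>x::real\<bar> < 1"
  shows "convergent_prod (\<lambda>k. 1 + t * x ^ (2 ^ k) + x ^ (2 ^ (k + 1)))"
proof (rule abs_convergent_prod_imp_convergent_prod, rule summable_imp_abs_convergent_prod)
  have sg: "summable (\<lambda>k. (\<bar>t\<bar> + 1) * \<bar>x\<bar>^k)" using x by (intro summable_mult summable_geometric) simp
  have le: "norm (norm ((1 + t * x ^ (2 ^ k) + x ^ (2 ^ (k + 1))) - 1)) \<le> (\<bar>t\<bar> + 1) * \<bar>x\<bar>^k" for k
  proof -
    have a: "\<bar>x\<bar>^(2^k) \<le> \<bar>x\<bar>^k" using x
      by (intro power_decreasing) (auto intro: less_imp_le[OF less_exp])
    have kk: "k \<le> 2^(k+1)" using less_exp[of "k+1"] by simp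
    have b: "\<bar>x\<bar>^(2^(k+1)) \<le> \<bar>x\<bar>^k"
      by (rule power_decreasing[OF kk]) (use x in auto)
    have "norm (norm ((1 + t * x ^ (2 ^ k) + x ^ (2 ^ (k + 1))) - 1)) = \<bar>t * x ^ (2 ^ k) + x ^ (2 ^ (k + 1))\<bar>"
      by simp
    also have "\<dots> \<le> \<bar>t * x ^ (2 ^ k)\<bar> + \<bar>x ^ (2 ^ (k + 1))\<bar>" by (rule abs_triangle_ineq)
    also have "\<dots> = \<bar>t\<bar> * \<bar>x\<bar>^(2^k) + \<bar>x\<bar>^(2^(k+1))" by (simp add: abs_mult power_abs)
    also have "\<dots> \<le> \<bar>t\<bar> * \<bar>x\<bar>^k + \<bar>x\<bar>^k"
      using a b by (intro add_mono mult_left_mono) auto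
    finally show ?thesis by (simp add: algebra_simps)
  qed
  show "summable (\<lambda>k. norm ((1 + t * x ^ (2 ^ k) + x ^ (2 ^ (k + 1))) - 1))"
    by (rule summable_comparison_test'[OF sg le])
qed

lemma real_part:
  assumes x: "\<bar>x::real\<bar> < 1"
  shows "summable (\<lambda>n. bb t n * x ^ n)
         \<and> convergent_prod (\<lambda>k. 1 + t * x ^ (2 ^ k) + x ^ (2 ^ (k + 1)))
         \<and> (\<Sum>n. bb t n * x ^ n) = x * (\<Prod>k. 1 + t * x ^ (2 ^ k) + x ^ (2 ^ (k + 1)))"
proof (intro conjI)
  show S: "summable (\<lambda>n. bb t n * x ^ n)" using bb_summable[OF x] .
  show C: "convergent_prod (\<lambda>k. 1 + t * x ^ (2 ^ k) + x ^ (2 ^ (k + 1)))" using conv_prod[OF x] .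
  define f where "f = (\<lambda>k. 1 + t * x ^ (2 ^ k) + x ^ (2 ^ (k + 1)))"
  have "(\<lambda>n. \<Prod>i<n. f i) \<longlonglongrightarrow> prodinf f"
    using convergent_prod_LIMSEQ[OF C[folded f_def]] by (simp add: LIMSEQ_lessThan_iff_atMost)
  moreover have "(\<lambda>N. rr t (x^(2^N))) \<longlonglongrightarrow> rr t 0"
  proof (rule isCont_tendsto_compose[OF rr_cont])
    have "(\<lambda>n. x^n) \<longlonglongrightarrow> 0" using x by (intro LIMSEQ_power_zero) simp
    moreover have "strict_mono (\<lambda>N. 2^N :: nat)" by (auto simp: strict_mono_def)
    ultimately have "((\<lambda>n. x^n) \<circ> (\<lambda>N. 2^N)) \<longlonglongrightarrow> 0" by (rule LIMSEQ_subseq_LIMSEQ)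
    then show "(\<lambda>N. x^(2^N)) \<longlonglongrightarrow> 0" by (simp add: o_def)
  qed
  ultimately have "(\<lambda>N. (\<Prod>i<N. f i) * rr t (x^(2^N))) \<longlonglongrightarrow> prodinf f * rr t 0"
    by (rule tendsto_mult)
  moreover have "(\<lambda>N. (\<Prod>i<N. f i) * rr t (x^(2^N))) = (\<lambda>N. rr t x)"
  proof (rule ext)
    fix N show "(\<Prod>i<N. f i) * rr t (x^(2^N)) = rr t x"
      unfolding f_def by (rule iter[OF x, symmetric])
  qed
  moreover have "rr t 0 = 1" unfolding rr_def using powser_zero[of "\<lambda>n. bb t (n+1)"] by simp
  ultimately have "(\<lambda>N. rr t x) \<longlonglongrightarrow> prodinf f" by simp
  then have R: "rr t x = prodinf f" by (rule LIMSEQ_unique[OF tendsto_const])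
  have "(\<Sum>n. bb t (Suc n) * x ^ Suc n) = (\<Sum>n. bb t n * x ^ n) - bb t 0 * x^0"
    by (rule suminf_split_head[OF S])
  moreover have "(\<Sum>n. bb t (Suc n) * x ^ Suc n) = x * rr t x"
    unfolding rr_def using suminf_mult[OF bb1_summable[OF x, of t], of x]
    by (simp add: mult_ac)
  ultimately show "(\<Sum>n. bb t n * x ^ n) = x * (\<Prod>k. 1 + t * x ^ (2 ^ k) + x ^ (2 ^ (k + 1)))"
    using R by (simp add: f_def)
qed


theorem theorem3p1:
  shows "((\<lambda>N. fps_X * (\<Prod>k<N. 1 + fps_const [:0, 1:] * fps_X ^ (2 ^ k) + fps_X ^ (2 ^ (k + 1))))
            \<longlonglongrightarrow> Abs_fps (\<lambda>n. stern_poly n))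
       \<and> (\<forall>(t::real) (x::real). \<bar>x\<bar> < 1 \<longrightarrow>
           summable (\<lambda>n. poly (map_poly of_int (stern_poly n)) t * x ^ n)
         \<and> convergent_prod (\<lambda>k. 1 + t * x ^ (2 ^ k) + x ^ (2 ^ (k + 1)))
         \<and> (\<Sum>n. poly (map_poly of_int (stern_poly n)) t * x ^ n)
             = x * (\<Prod>k. 1 + t * x ^ (2 ^ k) + x ^ (2 ^ (k + 1))))"
proof (intro conjI allI impI)
  show "(\<lambda>N. fps_X * (\<Prod>k<N. 1 + fps_const [:0, 1:] * fps_X ^ (2 ^ k) + fps_X ^ (2 ^ (k + 1))))
            \<longlonglongrightarrow> Abs_fps (\<lambda>n. stern_poly n)"
    using fps_part unfolding QQ_def PP_def .
  fix t x :: real assume x: "\<bar>x\<bar> < 1"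
  show "summable (\<lambda>n. poly (map_poly of_int (stern_poly n)) t * x ^ n)"
    using real_part[OF x, of t] unfolding bb_def by blast
  show "convergent_prod (\<lambda>k. 1 + t * x ^ (2 ^ k) + x ^ (2 ^ (k + 1)))"
    using real_part[OF x, of t] by blast
  show "(\<Sum>n. poly (map_poly of_int (stern_poly n)) t * x ^ n)
             = x * (\<Prod>k. 1 + t * x ^ (2 ^ k) + x ^ (2 ^ (k + 1)))"
    using real_part[OF x, of t] unfolding bb_def by blast
qed

end
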